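(* Let $K \ge 2$ be an integer, let $k \in \{1,\dots,K-1\}$, let $\mathbf{x}_0 = \mathbf{e}_k \in \{0,1\}^K$ be the $k$-th standard basis vector, and let $\mathbf{e}_K$ denote the $K$-th standard basis vector (the mask state). Let $\boldsymbol{\epsilon} = (\epsilon_1,\dots,\epsilon_K) \sim \mathcal{N}(\mathbf{0}, \mathbf{I}_K)$, let $Y = \max_{j \ne k} \epsilon_j - \epsilon_k$, and let $F_Y$ be the cumulative distribution function of $Y$. For real numbers $\tilde{\alpha}$ and $\tilde{\sigma} > 0$ with $\tilde{\alpha}^2 + \tilde{\sigma}^2 = 1$, define $\mathbf{w} = \tilde{\alpha}\mathbf{x}_0 + \tilde{\sigma}\boldsymbol{\epsilon}$ and $$\mathbf{z} = \begin{cases} \mathbf{x}_0 & \text{if } \mathbf{w}^{(k)} > \max_{j\neq k} \mathbf{w}^{(j)},\\ \mathbf{e}_K & \text{otherwise.}\end{cases}$$ Then for every $\gamma \in (0,1)$ there exist $\tilde{\alpha} \in \mathbb{R}$ and $\tilde{\sigma} > 0$ with $\tilde{\alpha}^2 + \tilde{\sigma}^2 = 1$, namely any such pair with $\tilde{\alpha}/\tilde{\sigma} = F_Y^{-1}(\gamma)$, for which $P(\mathbf{z} = \mathbf{x}_0) = \gamma$.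
   Context: This models one token of a masked discrete diffusion as the projection of a variance-preserving Gaussian latent: the discrete state keeps the ground-truth token $\mathbf{x}_0$ exactly when the ground-truth coordinate of the latent strictly exceeds all other coordinates, and otherwise collapses to the mask vector $\mathbf{e}_K$. Here $F_Y^{-1}$ denotes the inverse of $F_Y$ viewed as a map from $\mathbb{R}$ onto $(0,1)$. *)

theory Defs
  imports "HOL-Probability.Probability"
begin

definition gauss :: "nat \<Rightarrow> (nat \<Rightarrow> real) measure" where
  "gauss K = PiM {1..K} (\<lambda>_. std_normal_distribution)"

definition evec :: "nat \<Rightarrow> nat \<Rightarrow> real" where
  "evec i = (\<lambda>j. if j = i then 1 else 0)"

definition Yvar :: "nat \<Rightarrow> nat \<Rightarrow> (nat \<Rightarrow> real) \<Rightarrow> real" where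
  "Yvar K k eps = Max (eps ` ({1..K} - {k})) - eps k"

definition F_Y :: "nat \<Rightarrow> nat \<Rightarrow> real \<Rightarrow> real" where
  "F_Y K k y = measure (gauss K) {eps \<in> space (gauss K). Yvar K k eps \<le> y}"

definition F_Y_inv :: "nat \<Rightarrow> nat \<Rightarrow> real \<Rightarrow> real" where
  "F_Y_inv K k = inv_into UNIV (F_Y K k)"

definition latent :: "nat \<Rightarrow> real \<Rightarrow> real \<Rightarrow> (nat \<Rightarrow> real) \<Rightarrow> nat \<Rightarrow> real" where
  "latent k a s eps = (\<lambda>j. a * evec k j + s * eps j)"

definition zstate :: "nat \<Rightarrow> nat \<Rightarrow> real \<Rightarrow> real \<Rightarrow> (nat \<Rightarrow> real) \<Rightarrow> nat \<Rightarrow> real" where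
  "zstate K k a s eps =
     (let w = latent k a s eps in
      if w k > Max (w ` ({1..K} - {k})) then evec k else evec K)"

end

theory Submission
  imports Defs
begin
lemma ps_std: "prob_space std_normal_distribution"
  by (rule prob_space_normal_density) simp

lemma gauss_pps: "product_prob_space (\<lambda>_. std_normal_distribution)"
  unfolding product_prob_space_def product_prob_space_axioms_def product_sigma_finite_def
  using ps_std prob_space_imp_sigma_finite by blast

lemma gauss_ps: "prob_space (gauss K)"
proof -
  interpret product_prob_space "\<lambda>_. std_normal_distribution" "{1..K}" by (rule gauss_pps)
  show ?thesis unfolding gauss_def by (rule P.prob_space_axioms)
qed

lemma space_gauss: "space (gauss K) = ({1..K} \<rightarrow>\<^sub>E UNIV)"
  unfolding gauss_def by (simp add: space_PiM)

lemma meas_comp: "j \<in> {1..K} \<Longrightarrow> (\<lambda>x. x j) \<in> borel_measurable (gauss K)"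
proof -
  assume j: "j \<in> {1..K}"
  have "(\<lambda>x. x j) \<in> measurable (gauss K) std_normal_distribution"
    unfolding gauss_def by (rule measurable_component_singleton[OF j])
  moreover have "measurable (gauss K) std_normal_distribution = borel_measurable (gauss K)"
    by (rule measurable_cong_sets) auto
  ultimately show ?thesis by simp
qed

lemma comp_distr: "j \<in> {1..K} \<Longrightarrow> distributed (gauss K) lborel (\<lambda>x. x j) (normal_density 0 1)"
proof -
  assume j: "j \<in> {1..K}"
  interpret product_prob_space "\<lambda>_. std_normal_distribution" "{1..K}" by (rule gauss_pps)
  have "distr (gauss K) std_normal_distribution (\<lambda>x. x j) = std_normal_distribution"
    unfolding gauss_def using PiM_component[OF j] by simp
  moreover have "distr (gauss K) lborel (\<lambda>x. x j) = distr (gauss K) std_normal_distribution (\<lambda>x. x j)"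
    by (rule distr_cong) auto
  ultimately show ?thesis unfolding distributed_def using meas_comp[OF j]
    by auto
qed


lemma gauss_indep: "K \<noteq> 0 \<Longrightarrow> prob_space.indep_vars (gauss K) (\<lambda>_. std_normal_distribution) (\<lambda>i x. x i) {1..K}"
proof -
  interpret product_prob_space "\<lambda>_. std_normal_distribution" "{1..K}" by (rule gauss_pps)
  interpret G: prob_space "gauss K" by (rule gauss_ps)
  have ne: "{1..K} \<noteq> {}" if "K \<ge> 1" using that by auto
  assume False: "K \<noteq> 0"
    have rv: "random_variable std_normal_distribution (\<lambda>x. x i)" if "i \<in> {1..K}" for i
      unfolding gauss_def by (rule measurable_component_singleton[OF that])
    have "distr (gauss K) (PiM {1..K} (\<lambda>_. std_normal_distribution)) (\<lambda>x. \<lambda>i\<in>{1..K}. x i) = gauss K"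
      unfolding gauss_def by (rule distr_PiM_restrict_finite) auto
    moreover have "PiM {1..K} (\<lambda>i. distr (gauss K) std_normal_distribution (\<lambda>x. x i)) = gauss K"
      unfolding gauss_def
    proof (rule PiM_cong)
      fix x assume "x \<in> {1..K}"
      then show "distr (Pi\<^sub>M {1..K} (\<lambda>_. std_normal_distribution)) std_normal_distribution (\<lambda>xa. xa x) = std_normal_distribution"
        by (rule PiM_component)
    qed simp
    ultimately show ?thesis
      using G.indep_vars_iff_distr_eq_PiM'[where I="{1..K}" and M'="\<lambda>_. std_normal_distribution" and X="\<lambda>i x. x i"] rv False
      by (auto simp: gauss_def)
qed

lemma pair_indep: assumes "j \<in> {1..K}" "k \<in> {1..K}" "j \<noteq> k"
  shows "prob_space.indep_var (gauss K) borel (\<lambda>x. x j) borel (\<lambda>x. x k)"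
proof -
  interpret G: prob_space "gauss K" by (rule gauss_ps)
  have "G.indep_var (PiM {j} (\<lambda>_. std_normal_distribution)) (\<lambda>\<omega>. restrict (\<lambda>i. \<omega> i) {j})
     (PiM {k} (\<lambda>_. std_normal_distribution)) (\<lambda>\<omega>. restrict (\<lambda>i. \<omega> i) {k})"
    by (rule G.indep_var_restrict[OF gauss_indep]) (use assms in auto)
  then have "G.indep_var borel ((\<lambda>f. f j) \<circ> (\<lambda>\<omega>. restrict (\<lambda>i. \<omega> i) {j}))
     borel ((\<lambda>f. f k) \<circ> (\<lambda>\<omega>. restrict (\<lambda>i. \<omega> i) {k}))"
  proof (rule G.indep_var_compose)
    have "(\<lambda>f. f j) \<in> measurable (PiM {j} (\<lambda>_. std_normal_distribution)) std_normal_distribution"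
      by (rule measurable_component_singleton) simp
    moreover have "measurable (PiM {j} (\<lambda>_. std_normal_distribution)) std_normal_distribution = borel_measurable (PiM {j} (\<lambda>_. std_normal_distribution))"
      by (rule measurable_cong_sets) auto
    ultimately show "(\<lambda>f. f j) \<in> borel_measurable (PiM {j} (\<lambda>_. std_normal_distribution))"
      by simp
    have "(\<lambda>f. f k) \<in> measurable (PiM {k} (\<lambda>_. std_normal_distribution)) std_normal_distribution"
      by (rule measurable_component_singleton) simp
    moreover have "measurable (PiM {k} (\<lambda>_. std_normal_distribution)) std_normal_distribution = borel_measurable (PiM {k} (\<lambda>_. std_normal_distribution))"
      by (rule measurable_cong_sets) auto
    ultimately show "(\<lambda>f. f k) \<in> borel_measurable (PiM {k} (\<lambda>_. std_normal_distribution))"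
      by simp
  qed
  then show ?thesis by (simp add: comp_def)
qed

lemma diff_null: assumes "j \<in> {1..K}" "k \<in> {1..K}" "j \<noteq> k"
  shows "measure (gauss K) {x \<in> space (gauss K). x j - x k = c} = 0"
proof -
  interpret G: prob_space "gauss K" by (rule gauss_ps)
  have d: "distributed (gauss K) lborel (\<lambda>x. x j - x k) (normal_density (0 - 0) (sqrt (1\<^sup>2 + 1\<^sup>2)))"
    by (rule G.diff_indep_normal[OF pair_indep[OF assms]]) (use assms comp_distr in auto)
  have "emeasure (gauss K) ((\<lambda>x. x j - x k) -` {c} \<inter> space (gauss K)) = 0"
    by (subst distributed_emeasure[OF d]) (auto intro!: nn_integral_null_set)
  moreover have "(\<lambda>x. x j - x k) -` {c} \<inter> space (gauss K) = {x \<in> space (gauss K). x j - x k = c}" by auto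
  ultimately show ?thesis by (simp add: measure_def)
qed


lemma meas_Y: assumes "k \<in> {1..K}" shows "Yvar K k \<in> borel_measurable (gauss K)"
proof -
  have "(\<lambda>x. Max ((\<lambda>i. x i) ` ({1..K} - {k}))) \<in> borel_measurable (gauss K)"
    by (rule borel_measurable_Max) (auto intro: meas_comp)
  then show ?thesis unfolding Yvar_def
    using meas_comp[OF assms] by (intro borel_measurable_diff) auto
qed

lemma Y_point: assumes "k \<in> {1..K}" "K \<ge> 2"
  shows "measure (gauss K) {x \<in> space (gauss K). Yvar K k x = c} = 0"
proof -
  interpret G: prob_space "gauss K" by (rule gauss_ps)
  define S where "S = {1..K} - {k}"
  have finS: "finite S" unfolding S_def by auto
  define A where "A j = {x \<in> space (gauss K). x j - x k = c}" for j
  have Asets: "A j \<in> sets (gauss K)" if "j \<in> S" for j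
  proof -
    have "(\<lambda>x. x j - x k) \<in> borel_measurable (gauss K)"
      using meas_comp[OF assms(1)] meas_comp[of j K] that unfolding S_def by auto
    from measurable_sets[OF this, of "{c}"] show ?thesis unfolding A_def
      by (simp add: vimage_def Int_def conj_commute)
  qed
  have sub: "{x \<in> space (gauss K). Yvar K k x = c} \<subseteq> (\<Union>j\<in>S. A j)"
  proof
    fix x assume x: "x \<in> {x \<in> space (gauss K). Yvar K k x = c}"
    have "(if k = 1 then 2 else 1) \<in> S" unfolding S_def using assms by auto
    then have ne: "S \<noteq> {}" by auto
    have "Max (x ` S) \<in> x ` S" using finS ne by (intro Max_in) auto
    then obtain j where "j \<in> S" "Max (x ` S) = x j" by auto
    then show "x \<in> (\<Union>j\<in>S. A j)" using x unfolding A_def Yvar_def S_def by auto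
  qed
  have "measure (gauss K) {x \<in> space (gauss K). Yvar K k x = c} \<le> measure (gauss K) (\<Union>j\<in>S. A j)"
    using sub Asets finS by (intro G.finite_measure_mono) auto
  also have "\<dots> \<le> (\<Sum>j\<in>S. measure (gauss K) (A j))"
    using Asets finS by (intro G.finite_measure_subadditive_finite) auto
  also have "\<dots> = 0" unfolding A_def S_def
    using diff_null assms by (intro sum.neutral) auto
  finally show ?thesis by (simp add: measure_nonneg antisym)
qed


lemma cdf_facts: assumes k: "k \<in> {1..K}" and K: "K \<ge> 2"
  defines "D \<equiv> distr (gauss K) borel (Yvar K k)"
  shows "real_distribution D" "\<And>y. F_Y K k y = cdf D y" "\<And>y. measure D {y} = 0"
    "\<And>y. measure D {..<y} = measure (gauss K) {x \<in> space (gauss K). Yvar K k x < y}"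
proof -
  interpret G: prob_space "gauss K" by (rule gauss_ps)
  have m: "Yvar K k \<in> borel_measurable (gauss K)" by (rule meas_Y[OF k])
  show "real_distribution D" unfolding D_def using m by simp
  fix y
  show "F_Y K k y = cdf D y" unfolding F_Y_def cdf_def D_def using m
    by (subst measure_distr) (auto simp: vimage_def Int_def conj_commute)
  show "measure D {y} = 0" unfolding D_def using m Y_point[OF k K, of y]
    by (subst measure_distr) (auto simp: vimage_def Int_def conj_commute)
  show "measure D {..<y} = measure (gauss K) {x \<in> space (gauss K). Yvar K k x < y}" unfolding D_def using m
    by (subst measure_distr) (auto simp: vimage_def Int_def conj_commute)
qed

lemma F_Y_inv_ok: assumes k: "k \<in> {1..K}" and K: "K \<ge> 2" and g: "0 < g" "g < 1"
  shows "measure (gauss K) {x \<in> space (gauss K). Yvar K k x < F_Y_inv K k g} = g"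
proof -
  define D where "D = distr (gauss K) borel (Yvar K k)"
  note cf = cdf_facts[OF k K, folded D_def]
  interpret real_distribution D by (rule cf(1))
  have cont: "isCont (cdf D) y" for y using isCont_cdf cf(3) by simp
  have "eventually (\<lambda>y. cdf D y < g) at_bot"
    using cdf_lim_at_bot g by (intro order_tendstoD) auto
  then obtain a where a: "cdf D a < g" by (auto simp: eventually_at_bot_linorder)
  have "eventually (\<lambda>y. cdf D y > g) at_top"
    using cdf_lim_at_top_prob g by (intro order_tendstoD) auto
  then obtain b where b: "cdf D b > g" by (auto simp: eventually_at_top_linorder)
  have ab: "a \<le> b"
  proof (rule ccontr)
    assume "\<not> a \<le> b" then have "cdf D b \<le> cdf D a" by (intro cdf_nondecreasing) auto
    then show False using a b by auto
  qed
  have "\<exists>x\<ge>a. x \<le> b \<and> cdf D x = g"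
    using a b ab cont by (intro IVT') (auto intro: continuous_at_imp_continuous_on)
  then obtain x where "cdf D x = g" by auto
  then have "g \<in> range (F_Y K k)" using cf(2) by (metis rangeI)
  then have c: "F_Y K k (F_Y_inv K k g) = g" unfolding F_Y_inv_def by (rule f_inv_into_f)
  define c where "c = F_Y_inv K k g"
  have "(cdf D \<longlongrightarrow> measure D {..<c}) (at_left c)" by (rule cdf_at_left)
  moreover have "(cdf D \<longlongrightarrow> cdf D c) (at_left c)"
    using cont[of c] by (simp add: isCont_def filterlim_at_split)
  ultimately have "measure D {..<c} = cdf D c"
    by (intro tendsto_unique[OF trivial_limit_at_left_real])
  then show ?thesis using cf(2)[of c] cf(4)[of c] c unfolding c_def by simp
qed


lemma zstate_iff: assumes "s > 0" "k \<in> {1..K-1}" "K \<ge> 2"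
  shows "zstate K k a s eps = evec k \<longleftrightarrow> Yvar K k eps < a / s"
proof -
  define S where "S = {1..K} - {k}"
  have finS: "finite S" unfolding S_def by auto
  have "K \<in> S" unfolding S_def using assms by auto
  then have ne: "S \<noteq> {}" by auto
  have neq: "evec k \<noteq> evec K" using assms by (auto simp: evec_def fun_eq_iff)
  have wk: "latent k a s eps k = a + s * eps k" by (simp add: latent_def evec_def)
  have img: "latent k a s eps ` S = (\<lambda>m. s * m) ` (eps ` S)"
    unfolding image_image by (rule image_cong) (auto simp: S_def latent_def evec_def)
  have mono: "mono (\<lambda>m::real. s * m)" using assms(1) by (auto intro!: monoI mult_left_mono)
  have mx: "Max (latent k a s eps ` S) = s * Max (eps ` S)"
    unfolding img using mono_Max_commute[OF mono, of "eps ` S"] finS ne by simp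
  have "zstate K k a s eps = evec k \<longleftrightarrow> a + s * eps k > s * Max (eps ` S)"
    unfolding zstate_def Let_def using neq wk mx by (auto simp: S_def)
  also have "\<dots> \<longleftrightarrow> (Max (eps ` S) - eps k) * s < a" by (simp add: algebra_simps)
  also have "\<dots> \<longleftrightarrow> Yvar K k eps < a / s" unfolding Yvar_def S_def using assms(1)
    by (simp add: pos_less_divide_eq)
  finally show ?thesis .
qed

theorem lemma3p1:
  fixes K k :: nat and \<gamma> :: real
  assumes "K \<ge> 2" and "k \<in> {1..K-1}" and "0 < \<gamma>" and "\<gamma> < 1"
  shows "(\<exists>a s. s > 0 \<and> a\<^sup>2 + s\<^sup>2 = 1 \<and> a / s = F_Y_inv K k \<gamma>) \<and>
         (\<forall>a s. s > 0 \<longrightarrow> a\<^sup>2 + s\<^sup>2 = 1 \<longrightarrow> a / s = F_Y_inv K k \<gamma> \<longrightarrow>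
            measure (gauss K) {eps \<in> space (gauss K). zstate K k a s eps = evec k} = \<gamma>)"
proof
  define c where "c = F_Y_inv K k \<gamma>"
  define s where "s = 1 / sqrt (1 + c\<^sup>2)"
  have pos: "0 < 1 + c\<^sup>2" by (simp add: add_pos_nonneg)
  have sp: "s > 0" unfolding s_def using pos by simp
  have "s\<^sup>2 = 1 / (1 + c\<^sup>2)" unfolding s_def using pos by (simp add: power_divide)
  then have "(c * s)\<^sup>2 + s\<^sup>2 = 1" using pos by (simp add: power_mult_distrib field_simps)
  moreover have "(c * s) / s = c" using sp by simp
  ultimately show "\<exists>a s. s > 0 \<and> a\<^sup>2 + s\<^sup>2 = 1 \<and> a / s = F_Y_inv K k \<gamma>"
    using sp unfolding c_def by blast
next
  have k: "k \<in> {1..K}" using assms by auto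
  show "\<forall>a s. s > 0 \<longrightarrow> a\<^sup>2 + s\<^sup>2 = 1 \<longrightarrow> a / s = F_Y_inv K k \<gamma> \<longrightarrow>
            measure (gauss K) {eps \<in> space (gauss K). zstate K k a s eps = evec k} = \<gamma>"
  proof (intro allI impI)
    fix a s :: real assume s: "s > 0" and "a\<^sup>2 + s\<^sup>2 = 1" and as: "a / s = F_Y_inv K k \<gamma>"
    have "{eps \<in> space (gauss K). zstate K k a s eps = evec k}
        = {x \<in> space (gauss K). Yvar K k x < F_Y_inv K k \<gamma>}"
      using zstate_iff[OF s assms(2,1)] as by auto
    then show "measure (gauss K) {eps \<in> space (gauss K). zstate K k a s eps = evec k} = \<gamma>"
      using F_Y_inv_ok[OF k assms(1,3,4)] by simp
  qed
qed

end
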